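(* Let $\Omega\subseteq\mathbb{R}^n$ be open. A function $f\in\mathbb{A}(\Omega)$ is D-continuous if and only if $G(f)=f$, where $G(f)=[I(S(I(f))),S(I(S(f)))]$.
   Context: $\overline{\mathbb{R}}=\mathbb{R}\cup\{\pm\infty\}$, $\mathbb{I}\overline{\mathbb{R}}$ is the set of closed intervals $[\underline a,\overline a]$ with $\underline a\le\overline a$ in $\overline{\mathbb{R}}$, $a\in\overline{\mathbb{R}}$ identified with $[a,a]$. $\mathbb{A}(X)$ is the set of functions $X\to\mathbb{I}\overline{\mathbb{R}}$. $B_\delta(x)=\{y\in\Omega:\|x-y\|<\delta\}$. For dense $D\subseteq\Omega$ and $f\in\mathbb{A}(D)$: $I(D,\Omega,f)(x)=\sup_{\delta>0}\inf\{z\in f(y):y\in B_\delta(x)\cap D\}$, $S(D,\Omega,f)(x)=\inf_{\delta>0}\sup\{z\in f(y):y\in B_\delta(x)\cap D\}$, $F(D,\Omega,f)(x)=[I(D,\Omega,f)(x),S(D,\Omega,f)(x)]$; when $D=\Omega$ write $I(f),S(f)$. $f\in\mathbb{A}(\Omega)$ is D-continuous if $F(D,\Omega,f)=f$ for every dense subset $D$ of $\Omega$ (using the restriction of $f$ to $D$). *)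

theory Defs
  imports "HOL-Analysis.Analysis"
begin

text \<open>An interval [a,b] in the extended reals is represented by the pair (a,b) with a \<le> b;
  a value a is identified with (a,a).\<close>

definition interval_fun :: "'a set \<Rightarrow> ('a \<Rightarrow> ereal \<times> ereal) \<Rightarrow> bool" where
  "interval_fun \<Omega> f \<longleftrightarrow> (\<forall>x\<in>\<Omega>. fst (f x) \<le> snd (f x))"

definition degen :: "('a \<Rightarrow> ereal) \<Rightarrow> 'a \<Rightarrow> ereal \<times> ereal" where
  "degen g = (\<lambda>x. (g x, g x))"

definition Bdelta :: "'a::metric_space set \<Rightarrow> real \<Rightarrow> 'a \<Rightarrow> 'a set" where
  "Bdelta \<Omega> \<delta> x = {y\<in>\<Omega>. dist x y < \<delta>}"

definition lowerF :: "'a::metric_space set \<Rightarrow> 'a set \<Rightarrow> ('a \<Rightarrow> ereal \<times> ereal) \<Rightarrow> 'a \<Rightarrow> ereal" where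
  "lowerF D \<Omega> f x = (SUP \<delta>\<in>{0<..}. Inf {z. \<exists>y\<in>Bdelta \<Omega> \<delta> x \<inter> D. fst (f y) \<le> z \<and> z \<le> snd (f y)})"

definition upperF :: "'a::metric_space set \<Rightarrow> 'a set \<Rightarrow> ('a \<Rightarrow> ereal \<times> ereal) \<Rightarrow> 'a \<Rightarrow> ereal" where
  "upperF D \<Omega> f x = (INF \<delta>\<in>{0<..}. Sup {z. \<exists>y\<in>Bdelta \<Omega> \<delta> x \<inter> D. fst (f y) \<le> z \<and> z \<le> snd (f y)})"

definition FF :: "'a::metric_space set \<Rightarrow> 'a set \<Rightarrow> ('a \<Rightarrow> ereal \<times> ereal) \<Rightarrow> 'a \<Rightarrow> ereal \<times> ereal" where
  "FF D \<Omega> f x = (lowerF D \<Omega> f x, upperF D \<Omega> f x)"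

definition dense_subset :: "'a::topological_space set \<Rightarrow> 'a set \<Rightarrow> bool" where
  "dense_subset D \<Omega> \<longleftrightarrow> D \<subseteq> \<Omega> \<and> \<Omega> \<subseteq> closure D"

definition D_continuous :: "'a::metric_space set \<Rightarrow> ('a \<Rightarrow> ereal \<times> ereal) \<Rightarrow> bool" where
  "D_continuous \<Omega> f \<longleftrightarrow> (\<forall>D. dense_subset D \<Omega> \<longrightarrow> (\<forall>x\<in>\<Omega>. FF D \<Omega> f x = f x))"

definition GG :: "'a::metric_space set \<Rightarrow> ('a \<Rightarrow> ereal \<times> ereal) \<Rightarrow> 'a \<Rightarrow> ereal \<times> ereal" where
  "GG \<Omega> f x =
     (lowerF \<Omega> \<Omega> (degen (upperF \<Omega> \<Omega> (degen (lowerF \<Omega> \<Omega> f)))) x,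
      upperF \<Omega> \<Omega> (degen (lowerF \<Omega> \<Omega> (degen (upperF \<Omega> \<Omega> f)))) x)"

end

theory Submission
  imports Defs
begin

definition LL :: "'a::metric_space set \<Rightarrow> 'a set \<Rightarrow> ('a \<Rightarrow> ereal) \<Rightarrow> 'a \<Rightarrow> ereal" where
  "LL \<Omega> D g x = (SUP \<delta>\<in>{0<..}. INF y\<in>Bdelta \<Omega> \<delta> x \<inter> D. g y)"

definition UU :: "'a::metric_space set \<Rightarrow> 'a set \<Rightarrow> ('a \<Rightarrow> ereal) \<Rightarrow> 'a \<Rightarrow> ereal" where
  "UU \<Omega> D g x = (INF \<delta>\<in>{0<..}. SUP y\<in>Bdelta \<Omega> \<delta> x \<inter> D. g y)"

lemma mem_B: "y \<in> Bdelta \<Omega> \<delta> x \<longleftrightarrow> y \<in> \<Omega> \<and> dist x y < \<delta>"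
  by (simp add: Bdelta_def)

lemma Inf_interval:
  assumes "S \<subseteq> \<Omega>" "interval_fun \<Omega> f"
  shows "Inf {z. \<exists>y\<in>S. fst (f y) \<le> z \<and> z \<le> snd (f y)} = (INF y\<in>S. fst (f y))"
proof (rule antisym)
  show "Inf {z. \<exists>y\<in>S. fst (f y) \<le> z \<and> z \<le> snd (f y)} \<le> (INF y\<in>S. fst (f y))"
  proof (rule INF_greatest)
    fix y assume "y \<in> S"
    then have "fst (f y) \<in> {z. \<exists>y\<in>S. fst (f y) \<le> z \<and> z \<le> snd (f y)}"
      using assms by (auto simp: interval_fun_def)
    then show "Inf {z. \<exists>y\<in>S. fst (f y) \<le> z \<and> z \<le> snd (f y)} \<le> fst (f y)" by (rule Inf_lower)
  qed
  show "(INF y\<in>S. fst (f y)) \<le> Inf {z. \<exists>y\<in>S. fst (f y) \<le> z \<and> z \<le> snd (f y)}"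
    by (auto intro!: Inf_greatest INF_lower2)
qed

lemma Sup_interval:
  assumes "S \<subseteq> \<Omega>" "interval_fun \<Omega> f"
  shows "Sup {z. \<exists>y\<in>S. fst (f y) \<le> z \<and> z \<le> snd (f y)} = (SUP y\<in>S. snd (f y))"
proof (rule antisym)
  show "(SUP y\<in>S. snd (f y)) \<le> Sup {z. \<exists>y\<in>S. fst (f y) \<le> z \<and> z \<le> snd (f y)}"
  proof (rule SUP_least)
    fix y assume "y \<in> S"
    then have "snd (f y) \<in> {z. \<exists>y\<in>S. fst (f y) \<le> z \<and> z \<le> snd (f y)}"
      using assms by (auto simp: interval_fun_def)
    then show "snd (f y) \<le> Sup {z. \<exists>y\<in>S. fst (f y) \<le> z \<and> z \<le> snd (f y)}" by (rule Sup_upper)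
  qed
  show "Sup {z. \<exists>y\<in>S. fst (f y) \<le> z \<and> z \<le> snd (f y)} \<le> (SUP y\<in>S. snd (f y))"
    by (auto intro!: Sup_least SUP_upper2)
qed

lemma lowerF_eq:
  assumes "interval_fun \<Omega> f"
  shows "lowerF D \<Omega> f x = LL \<Omega> D (\<lambda>y. fst (f y)) x"
  unfolding lowerF_def LL_def
  by (intro SUP_cong refl Inf_interval[OF _ assms]) (auto simp: Bdelta_def)

lemma upperF_eq:
  assumes "interval_fun \<Omega> f"
  shows "upperF D \<Omega> f x = UU \<Omega> D (\<lambda>y. snd (f y)) x"
  unfolding upperF_def UU_def
  by (intro INF_cong refl Sup_interval[OF _ assms]) (auto simp: Bdelta_def)

lemma interval_degen: "interval_fun \<Omega> (degen g)"
  by (simp add: interval_fun_def degen_def)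

lemma lowerF_degen: "lowerF D \<Omega> (degen g) x = LL \<Omega> D g x"
  using lowerF_eq[OF interval_degen] by (simp add: degen_def)

lemma upperF_degen: "upperF D \<Omega> (degen g) x = UU \<Omega> D g x"
  using upperF_eq[OF interval_degen] by (simp add: degen_def)

lemma UU_neg: "UU \<Omega> D h x = - LL \<Omega> D (\<lambda>y. - h y) x"
  unfolding UU_def LL_def ereal_INF_uminus_eq by (simp add: ereal_SUP_uminus_eq)

lemma LL_neg: "LL \<Omega> D h x = - UU \<Omega> D (\<lambda>y. - h y) x"
  by (simp add: UU_neg)

lemma LL_le_iff: "LL \<Omega> D g x \<le> a \<longleftrightarrow> (\<forall>\<delta>>0. (INF y\<in>Bdelta \<Omega> \<delta> x \<inter> D. g y) \<le> a)"
  by (auto simp: LL_def SUP_le_iff)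

lemma less_LL_iff: "a < LL \<Omega> D g x \<longleftrightarrow> (\<exists>\<delta>>0. a < (INF y\<in>Bdelta \<Omega> \<delta> x \<inter> D. g y))"
  by (auto simp: LL_def less_SUP_iff)

lemma UU_less_iff: "UU \<Omega> D g x < a \<longleftrightarrow> (\<exists>\<delta>>0. (SUP y\<in>Bdelta \<Omega> \<delta> x \<inter> D. g y) < a)"
  by (auto simp: UU_def INF_less_iff)

lemma LL_le_self: "x \<in> D \<Longrightarrow> x \<in> \<Omega> \<Longrightarrow> LL \<Omega> D g x \<le> g x"
  unfolding LL_le_iff by (auto intro!: INF_lower2 simp: mem_B)

lemma UU_ge_self: "x \<in> D \<Longrightarrow> x \<in> \<Omega> \<Longrightarrow> g x \<le> UU \<Omega> D g x"
  unfolding UU_def by (auto intro!: INF_greatest SUP_upper2 simp: mem_B)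

lemma LL_mono_set: "D \<subseteq> D' \<Longrightarrow> LL \<Omega> D' g x \<le> LL \<Omega> D g x"
  unfolding LL_def by (intro SUP_mono) (auto intro!: INF_superset_mono)

lemma LL_mono_fun: "(\<And>y. y \<in> D \<Longrightarrow> g y \<le> h y) \<Longrightarrow> LL \<Omega> D g x \<le> LL \<Omega> D h x"
  unfolding LL_def by (intro SUP_mono) (auto intro!: INF_mono)

lemma LL_cong: "(\<And>y. y \<in> \<Omega> \<Longrightarrow> g y = h y) \<Longrightarrow> LL \<Omega> D g x = LL \<Omega> D h x"
  unfolding LL_def by (intro SUP_cong refl INF_cong) (auto simp: mem_B)

lemma UU_cong: "(\<And>y. y \<in> \<Omega> \<Longrightarrow> g y = h y) \<Longrightarrow> UU \<Omega> D g x = UU \<Omega> D h x"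
  unfolding UU_def by (intro INF_cong refl SUP_cong) (auto simp: mem_B)

lemma LL_idem:
  assumes "x \<in> \<Omega>"
  shows "LL \<Omega> \<Omega> (LL \<Omega> \<Omega> k) x = LL \<Omega> \<Omega> k x"
proof (rule antisym)
  show "LL \<Omega> \<Omega> (LL \<Omega> \<Omega> k) x \<le> LL \<Omega> \<Omega> k x"
    by (rule LL_le_self[OF assms assms])
  have *: "a < LL \<Omega> \<Omega> (LL \<Omega> \<Omega> k) x" if "a < LL \<Omega> \<Omega> k x" for a
  proof -
    obtain \<delta> where d: "\<delta> > 0" "a < (INF y\<in>Bdelta \<Omega> \<delta> x \<inter> \<Omega>. k y)"
      using \<open>a < LL \<Omega> \<Omega> k x\<close> unfolding less_LL_iff by blast
    let ?m = "(INF y\<in>Bdelta \<Omega> \<delta> x \<inter> \<Omega>. k y)"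
    have "?m \<le> LL \<Omega> \<Omega> k y" if y: "y \<in> Bdelta \<Omega> \<delta> x \<inter> \<Omega>" for y
    proof -
      have "?m \<le> (INF z\<in>Bdelta \<Omega> (\<delta> - dist x y) y \<inter> \<Omega>. k z)"
      proof (rule INF_superset_mono)
        show "Bdelta \<Omega> (\<delta> - dist x y) y \<inter> \<Omega> \<subseteq> Bdelta \<Omega> \<delta> x \<inter> \<Omega>"
        proof
          fix z assume z: "z \<in> Bdelta \<Omega> (\<delta> - dist x y) y \<inter> \<Omega>"
          have "dist x z \<le> dist x y + dist y z" by (rule dist_triangle)
          then show "z \<in> Bdelta \<Omega> \<delta> x \<inter> \<Omega>" using z by (auto simp: mem_B)
        qed
      qed simp
      also have "\<dots> \<le> LL \<Omega> \<Omega> k y"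
        unfolding LL_def using y by (intro SUP_upper) (auto simp: mem_B)
      finally show ?thesis .
    qed
    then have "?m \<le> (INF y\<in>Bdelta \<Omega> \<delta> x \<inter> \<Omega>. LL \<Omega> \<Omega> k y)"
      by (auto intro!: INF_greatest)
    then show ?thesis
      unfolding less_LL_iff using d by (metis less_le_trans)
  qed
  show "LL \<Omega> \<Omega> k x \<le> LL \<Omega> \<Omega> (LL \<Omega> \<Omega> k) x"
    using *[of "LL \<Omega> \<Omega> (LL \<Omega> \<Omega> k) x"] by (meson not_le less_irrefl)
qed

lemma lower_char:
  "(\<forall>D. dense_subset D \<Omega> \<longrightarrow> (\<forall>x\<in>\<Omega>. LL \<Omega> D g x = g x)) \<longleftrightarrow>
   (\<forall>x\<in>\<Omega>. LL \<Omega> \<Omega> (UU \<Omega> \<Omega> (LL \<Omega> \<Omega> g)) x = g x)"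
proof
  assume H: "\<forall>D. dense_subset D \<Omega> \<longrightarrow> (\<forall>x\<in>\<Omega>. LL \<Omega> D g x = g x)"
  have "dense_subset \<Omega> \<Omega>" by (simp add: dense_subset_def closure_subset)
  with H have lsc: "\<And>x. x \<in> \<Omega> \<Longrightarrow> LL \<Omega> \<Omega> g x = g x" by blast
  have e: "UU \<Omega> \<Omega> (LL \<Omega> \<Omega> g) = UU \<Omega> \<Omega> g"
    by (rule ext, rule UU_cong) (simp add: lsc)
  show "\<forall>x\<in>\<Omega>. LL \<Omega> \<Omega> (UU \<Omega> \<Omega> (LL \<Omega> \<Omega> g)) x = g x"
  proof
    fix x assume x: "x \<in> \<Omega>"
    have "LL \<Omega> \<Omega> (UU \<Omega> \<Omega> g) x = g x"
    proof (rule antisym)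
      have "g x = LL \<Omega> \<Omega> g x" using lsc x by simp
      also have "\<dots> \<le> LL \<Omega> \<Omega> (UU \<Omega> \<Omega> g) x"
        by (rule LL_mono_fun) (rule UU_ge_self)
      finally show "g x \<le> LL \<Omega> \<Omega> (UU \<Omega> \<Omega> g) x" .
      show "LL \<Omega> \<Omega> (UU \<Omega> \<Omega> g) x \<le> g x"
      proof (rule ccontr)
        assume "\<not> ?thesis"
        then have "g x < LL \<Omega> \<Omega> (UU \<Omega> \<Omega> g) x" by simp
        then obtain c where c: "g x < c" "c < LL \<Omega> \<Omega> (UU \<Omega> \<Omega> g) x" using dense by blast
        then obtain \<delta> where d: "\<delta> > 0" "c < (INF y\<in>Bdelta \<Omega> \<delta> x \<inter> \<Omega>. UU \<Omega> \<Omega> g y)"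
          unfolding less_LL_iff by blast
        have cU: "c < UU \<Omega> \<Omega> g p" if "p \<in> Bdelta \<Omega> \<delta> x" for p
          using d(2) that by (metis IntI INF_lower less_le_trans mem_B)
        define A where "A = {y \<in> Bdelta \<Omega> \<delta> x. g y \<le> c}"
        define D where "D = \<Omega> - A"
        have "dense_subset D \<Omega>"
          unfolding dense_subset_def
        proof
          show "D \<subseteq> \<Omega>" by (auto simp: D_def)
          show "\<Omega> \<subseteq> closure D"
          proof
            fix p assume p: "p \<in> \<Omega>"
            show "p \<in> closure D"
              unfolding closure_approachable
            proof (intro allI impI)
              fix e :: real assume e: "e > 0"
              show "\<exists>q\<in>D. dist q p < e"
              proof (rule ccontr)
                assume nq: "\<not> (\<exists>q\<in>D. dist q p < e)"
                then have "p \<notin> D" using e by auto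
                then have pA: "p \<in> A" using p by (auto simp: D_def)
                then have pB: "p \<in> Bdelta \<Omega> \<delta> x" by (simp add: A_def)
                define e' where "e' = min e (\<delta> - dist x p)"
                have e': "e' > 0" using e pB by (auto simp: e'_def mem_B)
                have "g y \<le> c" if y: "y \<in> Bdelta \<Omega> e' p \<inter> \<Omega>" for y
                proof -
                  have "dist y p < e" using y by (auto simp: mem_B e'_def dist_commute)
                  then have "y \<notin> D" using nq by auto
                  then have "y \<in> A" using y by (auto simp: D_def)
                  then show ?thesis by (simp add: A_def)
                qed
                then have "(SUP y\<in>Bdelta \<Omega> e' p \<inter> \<Omega>. g y) \<le> c" by (rule SUP_least)
                then have "UU \<Omega> \<Omega> g p \<le> c"
                  unfolding UU_def using e' by (intro INF_lower2[of e']) auto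
                with cU[OF pB] show False by simp
              qed
            qed
          qed
        qed
        with H x have LD: "LL \<Omega> D g x = g x" by blast
        have "c \<le> (INF y\<in>Bdelta \<Omega> \<delta> x \<inter> D. g y)"
          by (rule INF_greatest) (auto simp: D_def A_def)
        also have "\<dots> \<le> LL \<Omega> D g x"
          unfolding LL_def using d(1) by (intro SUP_upper) auto
        finally show False using LD c(1) by simp
      qed
    qed
    then show "LL \<Omega> \<Omega> (UU \<Omega> \<Omega> (LL \<Omega> \<Omega> g)) x = g x"
      by (simp add: e)
  qed
next
  assume E: "\<forall>x\<in>\<Omega>. LL \<Omega> \<Omega> (UU \<Omega> \<Omega> (LL \<Omega> \<Omega> g)) x = g x"
  have lsc: "LL \<Omega> \<Omega> g x = g x" if x: "x \<in> \<Omega>" for x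
  proof -
    have "LL \<Omega> \<Omega> g x = LL \<Omega> \<Omega> (LL \<Omega> \<Omega> (UU \<Omega> \<Omega> (LL \<Omega> \<Omega> g))) x"
      by (rule LL_cong) (simp add: E)
    also have "\<dots> = LL \<Omega> \<Omega> (UU \<Omega> \<Omega> (LL \<Omega> \<Omega> g)) x" by (rule LL_idem[OF x])
    also have "\<dots> = g x" using E x by simp
    finally show ?thesis .
  qed
  have e: "UU \<Omega> \<Omega> (LL \<Omega> \<Omega> g) = UU \<Omega> \<Omega> g"
    by (rule ext, rule UU_cong) (simp add: lsc)
  have E': "LL \<Omega> \<Omega> (UU \<Omega> \<Omega> g) x = g x" if "x \<in> \<Omega>" for x
    using E that by (simp add: e)
  show "\<forall>D. dense_subset D \<Omega> \<longrightarrow> (\<forall>x\<in>\<Omega>. LL \<Omega> D g x = g x)"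
  proof (intro allI impI ballI)
    fix D x assume Dd: "dense_subset D \<Omega>" and x: "x \<in> \<Omega>"
    have DO: "D \<subseteq> \<Omega>" and cl: "\<Omega> \<subseteq> closure D" using Dd by (auto simp: dense_subset_def)
    show "LL \<Omega> D g x = g x"
    proof (rule antisym)
      have "g x = LL \<Omega> \<Omega> g x" using lsc x by simp
      also have "\<dots> \<le> LL \<Omega> D g x" by (rule LL_mono_set[OF DO])
      finally show "g x \<le> LL \<Omega> D g x" .
      show "LL \<Omega> D g x \<le> g x"
      proof (rule ccontr)
        assume "\<not> ?thesis"
        then have "g x < LL \<Omega> D g x" by simp
        then obtain c where c: "g x < c" "c < LL \<Omega> D g x" using dense by blast
        then obtain \<delta> where d: "\<delta> > 0" "c < (INF y\<in>Bdelta \<Omega> \<delta> x \<inter> D. g y)"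
          unfolding less_LL_iff by blast
        have "(INF y\<in>Bdelta \<Omega> \<delta> x \<inter> \<Omega>. UU \<Omega> \<Omega> g y) \<le> LL \<Omega> \<Omega> (UU \<Omega> \<Omega> g) x"
          using LL_le_iff[of \<Omega> \<Omega> "UU \<Omega> \<Omega> g" x "LL \<Omega> \<Omega> (UU \<Omega> \<Omega> g) x"] d(1) by simp
        also have "\<dots> < c" using E'[OF x] c(1) by simp
        finally obtain p where p: "p \<in> Bdelta \<Omega> \<delta> x \<inter> \<Omega>" "UU \<Omega> \<Omega> g p < c"
          by (auto simp: INF_less_iff)
        then obtain e where e: "e > 0" "(SUP y\<in>Bdelta \<Omega> e p \<inter> \<Omega>. g y) < c"
          unfolding UU_less_iff by blast
        define e' where "e' = min e (\<delta> - dist x p)"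
        have e': "e' > 0" using e p by (auto simp: e'_def mem_B)
        have "p \<in> closure D" using p cl by auto
        then obtain q where q: "q \<in> D" "dist q p < e'"
          unfolding closure_approachable using e' by blast
        have qO: "q \<in> \<Omega>" using q DO by auto
        have "g q \<le> (SUP y\<in>Bdelta \<Omega> e p \<inter> \<Omega>. g y)"
          using q qO by (intro SUP_upper) (auto simp: mem_B e'_def dist_commute)
        also have "\<dots> < c" by (rule e(2))
        finally have gq: "g q < c" .
        have "dist x q < \<delta>"
          using q dist_triangle[of x q p] by (auto simp: e'_def dist_commute)
        then have "(INF y\<in>Bdelta \<Omega> \<delta> x \<inter> D. g y) \<le> g q"
          using q qO by (intro INF_lower) (auto simp: mem_B)
        with d(2) gq show False by simp
      qed
    qed
  qed
qed

lemma upper_char: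
  "(\<forall>D. dense_subset D \<Omega> \<longrightarrow> (\<forall>x\<in>\<Omega>. UU \<Omega> D h x = h x)) \<longleftrightarrow>
   (\<forall>x\<in>\<Omega>. UU \<Omega> \<Omega> (LL \<Omega> \<Omega> (UU \<Omega> \<Omega> h)) x = h x)"
proof -
  define g where "g = (\<lambda>y. - h y)"
  have e1: "UU \<Omega> D h z = - LL \<Omega> D g z" for D z by (simp add: UU_neg g_def)
  have e1': "UU \<Omega> \<Omega> h = (\<lambda>z. - LL \<Omega> \<Omega> g z)" by (rule ext) (simp add: e1)
  have e2: "LL \<Omega> \<Omega> (UU \<Omega> \<Omega> h) = (\<lambda>y. - UU \<Omega> \<Omega> (LL \<Omega> \<Omega> g) y)"
    by (rule ext) (simp add: e1' LL_neg[of \<Omega> \<Omega> "\<lambda>z. - LL \<Omega> \<Omega> g z"])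
  have e3: "UU \<Omega> \<Omega> (LL \<Omega> \<Omega> (UU \<Omega> \<Omega> h)) x = - LL \<Omega> \<Omega> (UU \<Omega> \<Omega> (LL \<Omega> \<Omega> g)) x" for x
    by (simp add: e2 UU_neg[of \<Omega> \<Omega> "\<lambda>y. - UU \<Omega> \<Omega> (LL \<Omega> \<Omega> g) y"])
  have hg: "h x = - g x" for x by (simp add: g_def)
  have iff: "(- a = - b) \<longleftrightarrow> a = b" for a b :: ereal by simp
  show ?thesis
    using lower_char[of \<Omega> g] unfolding e1 e3 hg iff .
qed

theorem theorem13:
  fixes \<Omega> :: "'a::euclidean_space set" and f :: "'a \<Rightarrow> ereal \<times> ereal"
  assumes "open \<Omega>" and "interval_fun \<Omega> f"
  shows "D_continuous \<Omega> f \<longleftrightarrow> (\<forall>x\<in>\<Omega>. GG \<Omega> f x = f x)"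
proof -
  define f1 where "f1 = (\<lambda>y. fst (f y))"
  define f2 where "f2 = (\<lambda>y. snd (f y))"
  have FFe: "FF D \<Omega> f x = (LL \<Omega> D f1 x, UU \<Omega> D f2 x)" for D x
    by (simp add: FF_def lowerF_eq[OF assms(2)] upperF_eq[OF assms(2)] f1_def f2_def)
  have lo: "lowerF \<Omega> \<Omega> f = LL \<Omega> \<Omega> f1"
    by (rule ext) (simp add: lowerF_eq[OF assms(2)] f1_def)
  have up: "upperF \<Omega> \<Omega> f = UU \<Omega> \<Omega> f2"
    by (rule ext) (simp add: upperF_eq[OF assms(2)] f2_def)
  have GGe: "GG \<Omega> f x = (LL \<Omega> \<Omega> (UU \<Omega> \<Omega> (LL \<Omega> \<Omega> f1)) x, UU \<Omega> \<Omega> (LL \<Omega> \<Omega> (UU \<Omega> \<Omega> f2)) x)" for x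
  proof -
    have a: "upperF \<Omega> \<Omega> (degen (LL \<Omega> \<Omega> f1)) = UU \<Omega> \<Omega> (LL \<Omega> \<Omega> f1)"
      by (rule ext) (simp add: upperF_degen)
    have b: "lowerF \<Omega> \<Omega> (degen (UU \<Omega> \<Omega> f2)) = LL \<Omega> \<Omega> (UU \<Omega> \<Omega> f2)"
      by (rule ext) (simp add: lowerF_degen)
    show ?thesis unfolding GG_def lo up a b lowerF_degen upperF_degen ..
  qed
  have fe: "f x = (f1 x, f2 x)" for x by (simp add: f1_def f2_def)
  have "D_continuous \<Omega> f \<longleftrightarrow>
     (\<forall>D. dense_subset D \<Omega> \<longrightarrow> (\<forall>x\<in>\<Omega>. LL \<Omega> D f1 x = f1 x)) \<and>
     (\<forall>D. dense_subset D \<Omega> \<longrightarrow> (\<forall>x\<in>\<Omega>. UU \<Omega> D f2 x = f2 x))"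
    unfolding D_continuous_def FFe fe prod_eq_iff by auto
  also have "\<dots> \<longleftrightarrow> (\<forall>x\<in>\<Omega>. LL \<Omega> \<Omega> (UU \<Omega> \<Omega> (LL \<Omega> \<Omega> f1)) x = f1 x) \<and>
     (\<forall>x\<in>\<Omega>. UU \<Omega> \<Omega> (LL \<Omega> \<Omega> (UU \<Omega> \<Omega> f2)) x = f2 x)"
    unfolding lower_char upper_char ..
  also have "\<dots> \<longleftrightarrow> (\<forall>x\<in>\<Omega>. GG \<Omega> f x = f x)"
    unfolding GGe fe prod_eq_iff by auto
  finally show ?thesis .
qed

end
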